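(* Let $N\ge 2$ and $1\le \tilde N\le N-1$ be integers, and consider the value functions $V_n^{\tilde N}$, $n\in\{0,\dots,N\}$, and the minimizers $\mu_n$ defined in the context. Suppose there exists $\beta>0$ such that, for all $x\in\mathcal{X}$, $$V_{\tilde N+1}^{\tilde N}(x)\le (\beta+1)\,V_{\tilde N}^{\tilde N}(x)\qquad\text{and}\qquad V_n^{\tilde N}(x)\le (\beta+1)\,l(x,\mu_n(x))\ \text{ for all } n\in\{\tilde N+1,\dots,N\}.$$ Then for all $x\in\mathcal{X}$, $$\frac{(\beta+1)^{N-\tilde N-1}}{(\beta+1)^{N-\tilde N-1}+\beta^{N-\tilde N}}\;V_N^{\tilde N}(x)\;\le\; V_{N-1}^{\tilde N}(x).$$
   Context: Let $\mathcal{D}\subset\mathbb{R}^n$ and $\mathcal{U}\subset\mathbb{R}^m$ be compact, and let $f:\mathcal{D}\times\mathcal{U}\to\mathcal{D}$ define the discrete-time system $x(k+1)=f(x(k),u(k))$, with $f(0,0)=0$. The stage cost $l:\mathcal{D}\times\mathcal{U}\to[0,\infty)$ is positive definite with $l(0,0)=0$. The set $\mathcal{X}\subseteq\mathcal{D}$ is control invariant: for every $x\in\mathcal{X}$ there is $u\in\mathcal{U}$ with $f(x,u)\in\mathcal{X}$. For $x\in\mathcal{X}$ write $\mathcal{U}(x)=\{u\in\mathcal{U}: f(x,u)\in\mathcal{X}\}$. Fix integers $N$ and $\tilde N$ with $0\le\tilde N\le N-1$. Define value functions on $\mathcal{X}$ recursively (dynamic programming form of the MPC problem with prediction horizon $N$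 in which the state constraint $x\in\mathcal{X}$ is imposed only during the first $N-\tilde N$ steps, the last $\tilde N$ steps being unconstrained): - $V_0^{\tilde N}\equiv 0$. - For $n\in\{1,\dots,\tilde N\}$: $V_n^{\tilde N}(x)=\min_{u\in\mathcal{U}}\big[V_{n-1}^{\tilde N}(f(x,u))+l(x,u)\big]$, with $\mu_n(x)$ a minimizer. - For $n\in\{\tilde N+1,\dots,N\}$: $V_n^{\tilde N}(x)=\min_{u\in\mathcal{U}(x)}\big[V_{n-1}^{\tilde N}(f(x,u))+l(x,u)\big]$, with $\mu_n(x)$ a minimizer; in particular $f(x,\mu_n(x))\in\mathcal{X}$. Equivalently, $V_n^{\tilde N}(x)$ is the minimal $n$-step cost $\sum_{i=0}^{n-1}l(x_i,u_i)$ over $u_i\in\mathcal{U}$, with $x_0=x$, $x_{i+1}=f(x_i,u_i)$, subject to the state constraints on the early steps of the horizon. All minima are assumed to be attained. *)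

theory Defs
  imports "HOL-Analysis.Analysis"
begin

text \<open>Value functions of the MPC problem in dynamic programming form.
  mpc_V f l U X Nt n x is V_n^Nt(x): for n \<le> Nt the input ranges over U,
  for n > Nt over the admissible inputs {u \<in> U. f x u \<in> X}.\<close>

fun mpc_V :: "('a \<Rightarrow> 'b \<Rightarrow> 'a) \<Rightarrow> ('a \<Rightarrow> 'b \<Rightarrow> real) \<Rightarrow> 'b set \<Rightarrow> 'a set
              \<Rightarrow> nat \<Rightarrow> nat \<Rightarrow> 'a \<Rightarrow> real" where
  "mpc_V f l U X Nt 0 x = 0"
| "mpc_V f l U X Nt (Suc n) x =
     (if Suc n \<le> Nt
      then (INF u\<in>U. mpc_V f l U X Nt n (f x u) + l x u)
      else (INF u\<in>{u\<in>U. f x u \<in> X}. mpc_V f l U X Nt n (f x u) + l x u))"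

end

theory Submission
  imports Defs
begin

theorem lemma2:
  fixes f :: "'a::euclidean_space \<Rightarrow> 'b::euclidean_space \<Rightarrow> 'a"
    and l :: "'a \<Rightarrow> 'b \<Rightarrow> real"
    and D :: "'a set" and U :: "'b set" and X :: "'a set"
    and N Nt :: nat and \<beta> :: real
    and \<mu> :: "nat \<Rightarrow> 'a \<Rightarrow> 'b"
  assumes D_compact: "compact D" and U_compact: "compact U"
    and zero_D: "0 \<in> D" and zero_U: "0 \<in> U"
    and f_maps: "\<And>x u. x \<in> D \<Longrightarrow> u \<in> U \<Longrightarrow> f x u \<in> D"
    and f_zero: "f 0 0 = 0"
    and l_nonneg: "\<And>x u. x \<in> D \<Longrightarrow> u \<in> U \<Longrightarrow> l x u \<ge> 0"
    and l_posdef: "\<And>x u. x \<in> D \<Longrightarrow> u \<in> U \<Longrightarrow> (x, u) \<noteq> (0, 0) \<Longrightarrow> l x u > 0"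
    and l_zero: "l 0 0 = 0"
    and X_sub: "X \<subseteq> D"
    and X_inv: "\<And>x. x \<in> X \<Longrightarrow> \<exists>u\<in>U. f x u \<in> X"
    and N_ge: "N \<ge> 2" and Nt_ge: "1 \<le> Nt" and Nt_le: "Nt \<le> N - 1"
    and mu_unc: "\<And>n x. n \<in> {1..Nt} \<Longrightarrow> x \<in> D \<Longrightarrow>
        \<mu> n x \<in> U \<and>
        mpc_V f l U X Nt n x = mpc_V f l U X Nt (n - 1) (f x (\<mu> n x)) + l x (\<mu> n x)"
    and mu_con: "\<And>n x. n \<in> {Nt+1..N} \<Longrightarrow> x \<in> X \<Longrightarrow>
        \<mu> n x \<in> U \<and> f x (\<mu> n x) \<in> X \<and>
        mpc_V f l U X Nt n x = mpc_V f l U X Nt (n - 1) (f x (\<mu> n x)) + l x (\<mu> n x)"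
    and beta_pos: "\<beta> > 0"
    and H1: "\<And>x. x \<in> X \<Longrightarrow> mpc_V f l U X Nt (Nt + 1) x \<le> (\<beta> + 1) * mpc_V f l U X Nt Nt x"
    and H2: "\<And>x n. x \<in> X \<Longrightarrow> n \<in> {Nt+1..N} \<Longrightarrow>
        mpc_V f l U X Nt n x \<le> (\<beta> + 1) * l x (\<mu> n x)"
  shows "\<And>x. x \<in> X \<Longrightarrow>
    ((\<beta> + 1) ^ (N - Nt - 1) / ((\<beta> + 1) ^ (N - Nt - 1) + \<beta> ^ (N - Nt)))
      * mpc_V f l U X Nt N x \<le> mpc_V f l U X Nt (N - 1) x"
proof -
  let ?V = "mpc_V f l U X Nt"
  define \<gamma> where "\<gamma> = \<beta> + 1"
  have gpos: "\<gamma> > 0" using beta_pos by (simp add: \<gamma>_def)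
  have nnD: "\<forall>x\<in>D. n \<le> Nt \<longrightarrow> 0 \<le> ?V n x" for n
  proof (induction n)
    case 0 then show ?case by simp
  next
    case (Suc n)
    show ?case
    proof (intro ballI impI)
      fix x assume x: "x \<in> D" and n: "Suc n \<le> Nt"
      have "0 \<le> (INF u\<in>U. ?V n (f x u) + l x u)"
        apply (rule cINF_greatest)
        using zero_U apply blast
        using Suc.IH x n f_maps l_nonneg by (meson Suc_leD add_nonneg_nonneg)
      then show "0 \<le> ?V (Suc n) x" using n by simp
    qed
  qed
  have nnX: "\<forall>x\<in>X. 0 \<le> ?V n x" for n
  proof (induction n)
    case 0 then show ?case by simp
  next
    case (Suc n)
    show ?case
    proof
      fix x assume x: "x \<in> X"
      show "0 \<le> ?V (Suc n) x"
      proof (cases "Suc n \<le> Nt")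
        case True then show ?thesis using nnD x X_sub by blast
      next
        case False
        have "0 \<le> (INF u\<in>{u\<in>U. f x u \<in> X}. ?V n (f x u) + l x u)"
          apply (rule cINF_greatest)
          using X_inv x apply blast
          using Suc.IH x f_maps l_nonneg X_sub by (auto intro!: add_nonneg_nonneg)
        then show ?thesis using False by simp
      qed
    qed
  qed
  have inf_le: "?V (Suc n) x \<le> ?V n (f x u) + l x u"
    if "Nt \<le> n" "x \<in> X" "u \<in> U" "f x u \<in> X" for n x u
  proof -
    have "(INF u\<in>{u\<in>U. f x u \<in> X}. ?V n (f x u) + l x u) \<le> ?V n (f x u) + l x u"
      apply (rule cINF_lower)
      apply (rule bdd_belowI[where m=0])
      using nnX l_nonneg X_sub that by (auto intro!: add_nonneg_nonneg)
    then show ?thesis using that by simp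
  qed
  have claim: "\<forall>x\<in>X. ?V (Nt + m) x \<le> (1 + \<beta> ^ m / \<gamma> ^ (m - 1)) * ?V (Nt + m - 1) x"
    if "1 \<le> m" "Nt + m \<le> N" for m
    using that
  proof (induction m)
    case 0 then show ?case by simp
  next
    case (Suc m)
    show ?case
    proof (cases "m = 0")
      case True
      then show ?thesis using H1 by (simp add: \<gamma>_def algebra_simps)
    next
      case False
      show ?thesis
      proof
        fix x assume x: "x \<in> X"
        define u where "u = \<mu> (Nt + m) x"
        have mem: "Nt + m \<in> {Nt+1..N}" using False Suc.prems by auto
        from mu_con[OF mem x] have u: "u \<in> U" "f x u \<in> X"
          and eq: "?V (Nt+m) x = ?V (Nt+m-1) (f x u) + l x u"
          by (auto simp: u_def)
        have h2: "?V (Nt+m) x \<le> \<gamma> * l x u" using H2[OF x mem] by (simp add: u_def \<gamma>_def)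
        have IH: "?V (Nt + m) (f x u) \<le> (1 + \<beta> ^ m / \<gamma> ^ (m - 1)) * ?V (Nt + m - 1) (f x u)"
          using Suc.IH False Suc.prems u by auto
        have i: "?V (Nt + Suc m) x \<le> ?V (Nt+m) (f x u) + l x u"
          using inf_le[of "Nt+m" x u] x u by simp
        define A where "A = ?V (Nt+m-1) (f x u)"
        define L where "L = l x u"
        define p where "p = \<beta> ^ m"
        define q where "q = \<gamma> ^ (m - 1)"
        have qpos: "q > 0" using gpos by (simp add: q_def)
        have pnn: "p \<ge> 0" using beta_pos by (simp add: p_def)
        have AL: "A + L \<le> \<gamma> * L" using h2 eq by (simp add: A_def L_def)
        have AbL: "A \<le> \<beta> * L" using AL by (simp add: \<gamma>_def algebra_simps)
        have k: "A \<le> \<beta> * (A + L) / \<gamma>"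
          using gpos AbL by (simp add: pos_le_divide_eq \<gamma>_def algebra_simps)
        have k2: "(p / q) * A \<le> (p / q) * (\<beta> * (A + L) / \<gamma>)"
          by (rule mult_left_mono[OF k]) (use pnn qpos in simp)
        have pow: "\<beta> ^ Suc m / \<gamma> ^ (Suc m - 1) = (p / q) * \<beta> / \<gamma>"
        proof -
          have "\<gamma> ^ m = q * \<gamma>" using False by (cases m) (auto simp: q_def)
          then show ?thesis by (simp add: p_def)
        qed
        have "?V (Nt + Suc m) x \<le> (1 + p / q) * A + L"
          using i IH by (simp add: A_def L_def p_def q_def)
        also have "\<dots> = A + L + (p / q) * A" by (simp add: algebra_simps)
        also have "\<dots> \<le> A + L + (p / q) * (\<beta> * (A + L) / \<gamma>)" using k2 by simp
        also have "\<dots> = (1 + \<beta> ^ Suc m / \<gamma> ^ (Suc m - 1)) * (A + L)"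
          unfolding pow using qpos gpos by (simp add: field_simps)
        also have "A + L = ?V (Nt + Suc m - 1) x" using eq by (simp add: A_def L_def)
        finally show "?V (Nt + Suc m) x \<le> (1 + \<beta> ^ Suc m / \<gamma> ^ (Suc m - 1)) * ?V (Nt + Suc m - 1) x" .
      qed
    qed
  qed
  fix x assume x: "x \<in> X"
  define k where "k = N - Nt"
  have k1: "1 \<le> k" "Nt + k = N" using Nt_le N_ge by (auto simp: k_def)
  have c: "?V N x \<le> (1 + \<beta> ^ k / \<gamma> ^ (k - 1)) * ?V (N - 1) x"
    using claim[OF k1(1)] k1 x by simp
  have e: "N - Nt - 1 = k - 1" by (simp add: k_def)
  define q where "q = \<gamma> ^ (k - 1)"
  have qpos: "q > 0" using gpos by (simp add: q_def)
  have den: "q + \<beta> ^ k > 0" using qpos beta_pos by (simp add: add_pos_nonneg)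
  have "(1 + \<beta> ^ k / q) = (q + \<beta> ^ k) / q" using qpos by (simp add: field_simps)
  then have c2: "?V N x \<le> ((q + \<beta> ^ k) / q) * ?V (N - 1) x" using c by (simp add: q_def)
  have "(q / (q + \<beta> ^ k)) * ?V N x \<le> (q / (q + \<beta> ^ k)) * (((q + \<beta> ^ k) / q) * ?V (N - 1) x)"
    by (rule mult_left_mono[OF c2]) (use qpos den in simp)
  also have "\<dots> = ?V (N - 1) x" using qpos den by simp
  finally show "((\<beta> + 1) ^ (N - Nt - 1) / ((\<beta> + 1) ^ (N - Nt - 1) + \<beta> ^ (N - Nt))) * ?V N x \<le> ?V (N - 1) x"
    by (simp add: e q_def \<gamma>_def k_def)
qed

end
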